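(* Let $S\subset[0,\infty)$ with $0\in S$, let $C>0$, and let $f\colon S\to[0,\infty)$ be a right-continuous decreasing function with $DP(\overline{f})\subset S$. If $f$ vanishes at infinity, then there exists a sequence $\{F_n\}_{n=0}^\infty$ of finite subsets of $S$ such that $0\in F_n$, $F_n\subset F_{n+1}$, and $\|g^f_{F_n}-f\|<C/2^n$ for all $n\in\mathbb{N}$, where $\|\cdot\|$ is the supremum norm over $S$.
   Context: For $S\subset[0,\infty)$ with $0\in S$, a function on $S$ is right-continuous if it is right-continuous for the relative topology of $S$. For a right-continuous decreasing $f\colon S\to[0,\infty)$ and $x\in\overline{S}$ (closure in $\mathbb{R}$), set $f(x+):=\sup\{f(y)\mid y\in(x,\infty)\cap S\}$ whenever $(x,\infty)\cap S\neq\emptyset$, and $f(x-):=\inf\{f(y)\mid y\in[0,x)\cap S\}$ if $x\neq0$, $f(0-):=f(0)$. Define $\overline{f}\colon\overline{S}\to[0,\infty)$ by $\overline{f}(x)=f(x)$ if $x\in S$, $\overline{f}(x)=f(x+)$ if $x\in\overline{S}\setminus S$ is a right accumulation point of $S$, and $\overline{f}(x)=f(x-)$ otherwise; with $\overline{f}(x-)$ defined by the same formula applied to $\overline{f}$ on $\overline{S}$, let $DP(\overline{f}):=\{x\in\overline{S}\setminus\{0\}\mid\overline{f}(x-)>\overline{f}(x)\}$. $f$ vanishes at infinity if for every $\varepsilon>0$ there is $x\in S$ with $f(y)<\varepsilon$ for all $y\in S$, $y\geq x$. For a finite $F=\{0=x_0<x_1<\cdots<x_m\}\subset S$ and decreasing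 $f$, the step function $g^f_F\colon S\to[0,\infty)$ is $g^f_F:=\sum_{i=1}^m f(x_{i-1})\chi_{[x_{i-1},x_i)\cap S}$, which is $0$ on $[x_m,\infty)\cap S$. *)

theory Defs
  imports "HOL-Analysis.Analysis"
begin

text \<open>Functions on a set S are modelled as total functions real \<Rightarrow> real; only values on S matter.\<close>

definition right_cont_on :: "real set \<Rightarrow> (real \<Rightarrow> real) \<Rightarrow> bool" where
  "right_cont_on S f \<longleftrightarrow> (\<forall>x\<in>S. (f \<longlongrightarrow> f x) (at x within (S \<inter> {x<..})))"

definition decreasing_on :: "real set \<Rightarrow> (real \<Rightarrow> real) \<Rightarrow> bool" where
  "decreasing_on S f \<longleftrightarrow> (\<forall>x\<in>S. \<forall>y\<in>S. x \<le> y \<longrightarrow> f y \<le> f x)"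

text \<open>f(x+) and f(x-) relative to the domain S.\<close>
definition rlim :: "real set \<Rightarrow> (real \<Rightarrow> real) \<Rightarrow> real \<Rightarrow> real" where
  "rlim S f x = Sup (f ` ({x<..} \<inter> S))"

definition llim :: "real set \<Rightarrow> (real \<Rightarrow> real) \<Rightarrow> real \<Rightarrow> real" where
  "llim S f x = (if x = 0 then f 0 else Inf (f ` ({0..<x} \<inter> S)))"

definition right_acc :: "real set \<Rightarrow> real \<Rightarrow> bool" where
  "right_acc S x \<longleftrightarrow> x \<in> closure (S \<inter> {x<..})"

definition fbar :: "real set \<Rightarrow> (real \<Rightarrow> real) \<Rightarrow> real \<Rightarrow> real" where
  "fbar S f x = (if x \<in> S then f x
                 else if right_acc S x then rlim S f x
                 else llim S f x)"

definition DP :: "real set \<Rightarrow> (real \<Rightarrow> real) \<Rightarrow> real set" where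
  "DP T g = {x \<in> T - {0}. llim T g x > g x}"

definition vanishes_at_infinity :: "real set \<Rightarrow> (real \<Rightarrow> real) \<Rightarrow> bool" where
  "vanishes_at_infinity S f \<longleftrightarrow> (\<forall>\<epsilon>>0. \<exists>x\<in>S. \<forall>y\<in>S. y \<ge> x \<longrightarrow> f y < \<epsilon>)"

text \<open>Step function g^f_F = \<Sum>_{i=1}^m f(x_{i-1}) \<chi>_{[x_{i-1},x_i) \<inter> S}, where
  x_0 < ... < x_m enumerate F.\<close>
definition step_fun :: "real set \<Rightarrow> (real \<Rightarrow> real) \<Rightarrow> real set \<Rightarrow> real \<Rightarrow> real" where
  "step_fun S f F y = (let xs = sorted_list_of_set F in
     (\<Sum>i\<in>{1..<length xs}. f (xs ! (i - 1)) * indicator ({xs ! (i - 1)..<xs ! i} \<inter> S) y))"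

definition sup_norm_on :: "real set \<Rightarrow> (real \<Rightarrow> real) \<Rightarrow> real" where
  "sup_norm_on S h = Sup ((\<lambda>y. \<bar>h y\<bar>) ` S)"

end

theory Submission imports Defs begin

lemma step_char:
  assumes fin: "finite F" and F0: "0 \<in> F" and y0: "0 \<le> y" and yS: "y \<in> S"
  shows "step_fun S f F y = (if y < Max F then f (Max {x\<in>F. x \<le> y}) else 0)"
proof -
  define xs where "xs = sorted_list_of_set F"
  define n where "n = length xs"
  have sx: "sorted xs" unfolding xs_def by simp
  have dx: "distinct xs" unfolding xs_def by simp
  have setx: "set xs = F" unfolding xs_def using fin by simp
  have mono: "\<And>i j. i \<le> j \<Longrightarrow> j < n \<Longrightarrow> xs ! i \<le> xs ! j"
    using sx n_def by (simp add: sorted_nth_mono)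
  have inF: "\<And>i. i < n \<Longrightarrow> xs ! i \<in> F" using setx n_def by auto
  have exF: "\<And>x. x \<in> F \<Longrightarrow> \<exists>i<n. xs ! i = x" using setx n_def by (auto simp: in_set_conv_nth)
  have sdef: "step_fun S f F y = (\<Sum>i\<in>{1..<n}. f (xs ! (i - 1)) * indicator ({xs ! (i - 1)..<xs ! i} \<inter> S) y)"
    unfolding step_fun_def xs_def n_def Let_def by simp
  show ?thesis
  proof (cases "y < Max F")
    case False
    have "\<And>i. i \<in> {1..<n} \<Longrightarrow> indicator ({xs ! (i - 1)..<xs ! i} \<inter> S) y = (0::real)"
    proof -
      fix i assume "i \<in> {1..<n}"
      then have "xs ! i \<le> Max F" using inF fin by auto
      then show "indicator ({xs ! (i - 1)..<xs ! i} \<inter> S) y = (0::real)" using False by auto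
    qed
    then show ?thesis using False sdef by simp
  next
    case True
    have "Max F \<in> F" using fin F0 by (intro Max_in) auto
    then have ex: "\<exists>i. i < n \<and> y < xs ! i" using exF[of "Max F"] True by auto
    define i0 where "i0 = (LEAST i. i < n \<and> y < xs ! i)"
    have i0: "i0 < n" "y < xs ! i0" using LeastI_ex[OF ex] i0_def by auto
    have below: "\<And>i. i < i0 \<Longrightarrow> xs ! i \<le> y"
    proof -
      fix i assume "i < i0"
      then have "\<not> (i < n \<and> y < xs ! i)" unfolding i0_def by (rule not_less_Least)
      then show "xs ! i \<le> y" using \<open>i < i0\<close> i0 by auto
    qed
    have n0: "n > 0" using i0 by simp
    have x0: "xs ! 0 \<le> y"
    proof -
      obtain j where "j < n" "xs ! j = 0" using exF[OF F0] by auto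
      then show ?thesis using mono[of 0 j] y0 by simp
    qed
    have i01: "i0 \<ge> 1" proof (rule ccontr)
      assume "\<not> 1 \<le> i0" then have "i0 = 0" by simp
      then show False using x0 i0 by simp
    qed
    have oth: "\<And>i. i \<in> {1..<n} \<Longrightarrow> i \<noteq> i0 \<Longrightarrow> f (xs ! (i - 1)) * indicator ({xs ! (i - 1)..<xs ! i} \<inter> S) y = 0"
    proof -
      fix i assume i: "i \<in> {1..<n}" "i \<noteq> i0"
      show "f (xs ! (i - 1)) * indicator ({xs ! (i - 1)..<xs ! i} \<inter> S) y = 0"
      proof (cases "i < i0")
        case True then show ?thesis using below[of i] by auto
      next
        case False
        then have "xs ! i0 \<le> xs ! (i - 1)" using i mono[of i0 "i - 1"] by auto
        then show ?thesis using i0 by auto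
      qed
    qed
    have "step_fun S f F y = f (xs ! (i0 - 1)) * indicator ({xs ! (i0 - 1)..<xs ! i0} \<inter> S) y"
    proof -
      have "step_fun S f F y = f (xs ! (i0 - 1)) * indicator ({xs ! (i0 - 1)..<xs ! i0} \<inter> S) y
         + (\<Sum>i\<in>{1..<n}-{i0}. f (xs ! (i - 1)) * indicator ({xs ! (i - 1)..<xs ! i} \<inter> S) y)"
        unfolding sdef by (rule sum.remove) (use i0 i01 in auto)
      moreover have "(\<Sum>i\<in>{1..<n}-{i0}. f (xs ! (i - 1)) * indicator ({xs ! (i - 1)..<xs ! i} \<inter> S) y) = 0"
        by (rule sum.neutral) (use oth in blast)
      ultimately show ?thesis by simp
    qed
    also have "\<dots> = f (xs ! (i0 - 1))" using below[of "i0 - 1"] i01 i0 yS by auto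
    also have "xs ! (i0 - 1) = Max {x\<in>F. x \<le> y}"
    proof (rule sym, rule Max_eqI)
      show "finite {x \<in> F. x \<le> y}" using fin by simp
      show "xs ! (i0 - 1) \<in> {x \<in> F. x \<le> y}" using inF[of "i0 - 1"] below[of "i0 - 1"] i0 i01 by auto
      fix x assume "x \<in> {x \<in> F. x \<le> y}"
      then obtain j where j: "j < n" "xs ! j = x" "x \<le> y" using exF by auto
      have "j < i0" proof (rule ccontr)
        assume "\<not> j < i0" then have "xs ! i0 \<le> xs ! j" using mono[of i0 j] j by simp
        then show False using j i0 by simp
      qed
      then show "x \<le> xs ! (i0 - 1)" using mono[of j "i0 - 1"] j i0 by simp
    qed
    finally show ?thesis using True by simp
  qed
qed

lemma f_le0:
  assumes "S \<subseteq> {0..}" "0 \<in> S" "decreasing_on S f" "z \<in> S"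
  shows "f z \<le> f 0"
  using assms unfolding decreasing_on_def by auto

lemma fbar_nonneg:
  assumes S0: "S \<subseteq> {0..}" "0 \<in> S" and nn: "\<forall>x\<in>S. f x \<ge> 0" and dec: "decreasing_on S f"
    and w: "0 \<le> w"
  shows "fbar S f w \<ge> 0"
proof (cases "w \<in> S")
  case True then show ?thesis using nn unfolding fbar_def by simp
next
  case wS: False
  show ?thesis
  proof (cases "right_acc S w")
    case True
    then have "S \<inter> {w<..} \<noteq> {}" unfolding right_acc_def by auto
    then obtain z where z: "z \<in> S" "z > w" by auto
    have bdd: "bdd_above (f ` ({w<..} \<inter> S))"
      using f_le0[OF S0 dec] by (auto intro!: bdd_aboveI)
    have "f z \<le> rlim S f w" unfolding rlim_def
      by (rule cSup_upper) (use z bdd in auto)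
    then show ?thesis using wS True nn z unfolding fbar_def by force
  next
    case False
    have w0: "w > 0" using wS w S0 by (cases "w = 0") auto
    have "llim S f w \<ge> 0" unfolding llim_def using w0 S0 nn
      by (auto intro!: cInf_greatest)
    then show ?thesis using wS False unfolding fbar_def by simp
  qed
qed

lemma level_point:
  assumes S0: "S \<subseteq> {0..}" "0 \<in> S" and nn: "\<forall>x\<in>S. f x \<ge> 0" and rc: "right_cont_on S f"
    and dec: "decreasing_on S f" and dp: "DP (closure S) (fbar S f) \<subseteq> S"
    and zS: "z \<in> S" and zc: "f z \<le> c" and eta: "\<eta> > 0"
  shows "\<exists>p\<in>S. f p < c + \<eta> \<and> (\<forall>y\<in>S. f y \<le> c \<longrightarrow> p \<le> y)"
proof -
  define A where "A = {y\<in>S. f y \<le> c}"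
  define a where "a = Inf A"
  have Ane: "A \<noteq> {}" using zS zc A_def by auto
  have Abdd: "bdd_below A" unfolding A_def using S0 by (auto intro!: bdd_belowI)
  have alow: "\<And>y. y \<in> A \<Longrightarrow> a \<le> y" unfolding a_def using Abdd by (simp add: cInf_lower)
  have a0: "a \<ge> 0" unfolding a_def using Ane S0 A_def by (auto intro!: cInf_greatest)
  have aappr: "\<And>d. d > 0 \<Longrightarrow> \<exists>y\<in>A. y < a + d"
  proof -
    fix d :: real assume "d > 0"
    then have "Inf A < a + d" using a_def by simp
    then show "\<exists>y\<in>A. y < a + d" using cInf_lessD[OF Ane] by blast
  qed
  have dec': "\<And>x y. x \<in> S \<Longrightarrow> y \<in> S \<Longrightarrow> x \<le> y \<Longrightarrow> f y \<le> f x"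
    using dec unfolding decreasing_on_def by blast
  show ?thesis
  proof (cases "a \<in> S")
    case True
    have "(f \<longlongrightarrow> f a) (at a within (S \<inter> {a<..}))" using rc True unfolding right_cont_on_def by blast
    then obtain d where d: "d > 0" "\<forall>x\<in>S \<inter> {a<..}. 0 < dist x a \<and> dist x a < d \<longrightarrow> dist (f x) (f a) < \<eta>"
      using eta unfolding Lim_within by blast
    obtain y where y: "y \<in> A" "y < a + d" using aappr d by blast
    have "f a < c + \<eta>"
    proof (cases "y = a")
      case True then show ?thesis using y A_def eta by auto
    next
      case False
      then have "y > a" using alow y by force
      then have "dist (f y) (f a) < \<eta>" using d y A_def by (auto simp: dist_real_def)
      then show ?thesis using y A_def by (auto simp: dist_real_def)
    qed
    then show ?thesis using True alow A_def by blast
  next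
    case aS: False
    have an0: "a \<noteq> 0" using aS S0 by auto
    have acl: "a \<in> closure S"
      unfolding closure_approachable
    proof (intro allI impI)
      fix e :: real assume "e > 0"
      then obtain y where "y \<in> A" "y < a + e" using aappr by blast
      then show "\<exists>y\<in>S. dist y a < e" using alow[of y] A_def by (intro bexI[of _ y]) (auto simp: dist_real_def)
    qed
    have racc: "right_acc S a"
      unfolding right_acc_def closure_approachable
    proof (intro allI impI)
      fix e :: real assume "e > 0"
      then obtain y where y: "y \<in> A" "y < a + e" using aappr by blast
      have "y \<noteq> a" using y aS A_def by auto
      then have "y > a" using alow y by force
      then show "\<exists>y\<in>S \<inter> {a<..}. dist y a < e" using y A_def by (auto simp: dist_real_def intro!: bexI[of _ y])
    qed
    have "rlim S f a \<le> c" unfolding rlim_def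
    proof (rule cSup_least)
      obtain y where y: "y \<in> A" "y < a + 1" using aappr[of 1] by auto
      have "y \<noteq> a" using y aS A_def by auto
      then have "y > a" using alow y by force
      then show "f ` ({a<..} \<inter> S) \<noteq> {}" using y A_def by auto
    next
      fix v assume "v \<in> f ` ({a<..} \<inter> S)"
      then obtain x where x: "x \<in> S" "x > a" "v = f x" by auto
      obtain y where y: "y \<in> A" "y < a + (x - a)" using aappr[of "x - a"] x by auto
      show "v \<le> c" using dec'[of y x] x y A_def by auto
    qed
    then have fba: "fbar S f a \<le> c" using aS racc unfolding fbar_def by simp
    have "a \<notin> DP (closure S) (fbar S f)" using dp aS by blast
    then have "\<not> llim (closure S) (fbar S f) a > fbar S f a" using acl an0 unfolding DP_def by blast
    then have "Inf (fbar S f ` ({0..<a} \<inter> closure S)) < c + \<eta>"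
      using fba an0 eta unfolding llim_def by simp
    moreover have "0 \<in> {0..<a} \<inter> closure S" using a0 an0 S0(2) closure_subset by auto
    then have "fbar S f ` ({0..<a} \<inter> closure S) \<noteq> {}" by blast
    ultimately have "\<exists>v\<in>fbar S f ` ({0..<a} \<inter> closure S). v < c + \<eta>"
      by (metis cInf_lessD)
    then obtain w where w: "w \<in> closure S" "0 \<le> w" "w < a" "fbar S f w < c + \<eta>"
      by auto
    have ygt: "\<And>y. y \<in> S \<Longrightarrow> f y \<le> c \<Longrightarrow> a \<le> y" using alow A_def by blast
    show ?thesis
    proof (cases "w \<in> S")
      case True
      then have "f w < c + \<eta>" using w unfolding fbar_def by simp
      moreover have "\<forall>y\<in>S. f y \<le> c \<longrightarrow> w \<le> y"
      proof (intro ballI impI)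
        fix y assume "y \<in> S" "f y \<le> c"
        then have "a \<le> y" by (rule ygt)
        then show "w \<le> y" using w  by linarith
      qed
      ultimately show ?thesis using True by blast
    next
      case wS: False
      show ?thesis
      proof (cases "right_acc S w")
        case True
        then have rl: "rlim S f w < c + \<eta>" using w wS unfolding fbar_def by simp
        have "\<forall>e>0. \<exists>y\<in>S \<inter> {w<..}. dist y w < e" using True unfolding right_acc_def closure_approachable by blast
        then have "\<exists>y\<in>S \<inter> {w<..}. dist y w < a - w" using w by simp
        then obtain x where x: "x \<in> S \<inter> {w<..}" "dist x w < a - w" by blast
        have bdd: "bdd_above (f ` ({w<..} \<inter> S))"
          using f_le0[OF S0 dec] by (auto intro!: bdd_aboveI)
        have "f x \<le> rlim S f w" unfolding rlim_def
          by (rule cSup_upper) (use x bdd in auto)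
        moreover have "x < a" using x by (auto simp: dist_real_def)
        ultimately have "f x < c + \<eta>" "x < a" using rl by auto
        moreover have "\<forall>y\<in>S. f y \<le> c \<longrightarrow> x \<le> y"
      proof (intro ballI impI)
        fix y assume "y \<in> S" "f y \<le> c"
        then have "a \<le> y" by (rule ygt)
        then show "x \<le> y" using w \<open>x < a\<close> by linarith
      qed
        ultimately show ?thesis using x by blast
      next
        case False
        have w0: "w \<noteq> 0" using wS S0 by auto
        then have "Inf (f ` ({0..<w} \<inter> S)) < c + \<eta>" using w wS False unfolding fbar_def llim_def by simp
        moreover have "0 \<in> {0..<w} \<inter> S" using w w0 S0 by auto
        then have "f ` ({0..<w} \<inter> S) \<noteq> {}" by blast
        ultimately have "\<exists>v\<in>f ` ({0..<w} \<inter> S). v < c + \<eta>"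
          by (metis cInf_lessD)
        then obtain x where x: "x \<in> S" "x < w" "f x < c + \<eta>"
          by auto
        have "\<forall>y\<in>S. f y \<le> c \<longrightarrow> x \<le> y"
      proof (intro ballI impI)
        fix y assume "y \<in> S" "f y \<le> c"
        then have "a \<le> y" by (rule ygt)
        then show "x \<le> y" using w x by linarith
      qed
        then show ?thesis using x by blast
      qed
    qed
  qed
qed

lemma good_set:
  assumes S0: "S \<subseteq> {0..}" "0 \<in> S" and nn: "\<forall>x\<in>S. f x \<ge> 0" and rc: "right_cont_on S f"
    and dec: "decreasing_on S f" and dp: "DP (closure S) (fbar S f) \<subseteq> S"
    and van: "vanishes_at_infinity S f" and e: "\<epsilon> > 0"
  shows "\<exists>G. finite G \<and> G \<subseteq> S \<and> 0 \<in> G \<and> (\<forall>y\<in>S. \<bar>step_fun S f G y - f y\<bar> \<le> \<epsilon>)"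
proof -
  define \<eta> where "\<eta> = \<epsilon> / 4"
  have eta: "\<eta> > 0" using e \<eta>_def by simp
  obtain M0 where M0: "M0 \<in> S" "\<forall>y\<in>S. y \<ge> M0 \<longrightarrow> f y < \<eta>"
    using van eta unfolding vanishes_at_infinity_def by blast
  obtain K :: nat where K: "f 0 / \<eta> < real K" using reals_Archimedean2 by blast
  have dec': "\<And>x y. x \<in> S \<Longrightarrow> y \<in> S \<Longrightarrow> x \<le> y \<Longrightarrow> f y \<le> f x"
    using dec unfolding decreasing_on_def by blast
  have "\<forall>k::nat. \<exists>p. k \<ge> 1 \<longrightarrow> p \<in> S \<and> f p < real k * \<eta> + \<eta> \<and> (\<forall>y\<in>S. f y \<le> real k * \<eta> \<longrightarrow> p \<le> y)"
  proof
    fix k :: nat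
    show "\<exists>p. k \<ge> 1 \<longrightarrow> p \<in> S \<and> f p < real k * \<eta> + \<eta> \<and> (\<forall>y\<in>S. f y \<le> real k * \<eta> \<longrightarrow> p \<le> y)"
    proof (cases "k \<ge> 1")
      case True
      have "\<eta> \<le> real k * \<eta>" using True eta by simp
      moreover have "f M0 < \<eta>" using M0 by blast
      ultimately have "f M0 \<le> real k * \<eta>" by linarith
      then have "\<exists>q\<in>S. f q < real k * \<eta> + \<eta> \<and> (\<forall>y\<in>S. f y \<le> real k * \<eta> \<longrightarrow> q \<le> y)"
        by (rule level_point[OF S0 nn rc dec dp M0(1) _ eta])
      then obtain q where q: "q \<in> S" "f q < real k * \<eta> + \<eta>" "\<forall>y\<in>S. f y \<le> real k * \<eta> \<longrightarrow> q \<le> y"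
        by (elim bexE conjE)
      show ?thesis by (intro exI[of _ q] impI conjI q)
    qed simp
  qed
  then have "\<exists>p. \<forall>k::nat. k \<ge> 1 \<longrightarrow> p k \<in> S \<and> f (p k) < real k * \<eta> + \<eta> \<and> (\<forall>y\<in>S. f y \<le> real k * \<eta> \<longrightarrow> p k \<le> y)"
    by (rule choice)
  then obtain p where p0: "\<forall>k::nat. k \<ge> 1 \<longrightarrow> p k \<in> S \<and> f (p k) < real k * \<eta> + \<eta> \<and> (\<forall>y\<in>S. f y \<le> real k * \<eta> \<longrightarrow> p k \<le> y)"
    by (rule exE)
  have p: "\<And>k::nat. k \<ge> 1 \<Longrightarrow> p k \<in> S \<and> f (p k) < real k * \<eta> + \<eta> \<and> (\<forall>y\<in>S. f y \<le> real k * \<eta> \<longrightarrow> p k \<le> y)"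
    using p0 by (intro mp[OF spec[OF p0]])
  define G where "G = insert 0 (insert M0 (p ` {1..K}))"
  have Gfin: "finite G" unfolding G_def by simp
  have GS: "G \<subseteq> S" unfolding G_def using S0 M0 p by auto
  have G0: "0 \<in> G" unfolding G_def by simp
  have "\<forall>y\<in>S. \<bar>step_fun S f G y - f y\<bar> \<le> \<epsilon>"
  proof
    fix y assume yS: "y \<in> S"
    have y0: "0 \<le> y" using yS S0 by auto
    note sc = step_char[OF Gfin G0 y0 yS, of f]
    show "\<bar>step_fun S f G y - f y\<bar> \<le> \<epsilon>"
    proof (cases "y < Max G")
      case False
      have "M0 \<le> Max G" using Gfin by (rule Max_ge) (simp add: G_def)
      then have "f y < \<eta>" using M0 False yS by auto
      then show ?thesis using sc False nn yS \<eta>_def e by auto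
    next
      case True
      define x where "x = Max {x\<in>G. x \<le> y}"
      have "x \<in> {x\<in>G. x \<le> y}" unfolding x_def using Gfin G0 y0 by (intro Max_in) auto
      then have xin: "x \<in> G" "x \<le> y" by auto
      have xmax: "\<And>z. z \<in> G \<Longrightarrow> z \<le> y \<Longrightarrow> z \<le> x" using Gfin x_def by auto
      have xS: "x \<in> S" using xin GS by auto
      define j where "j = nat \<lfloor>f y / \<eta>\<rfloor> + 1"
      have fy0: "f y \<ge> 0" using nn yS by auto
      have fy00: "f y \<le> f 0" using dec' S0 yS y0 by auto
      have fl0: "\<lfloor>f y / \<eta>\<rfloor> \<ge> 0" using fy0 eta by simp
      have j1: "j \<ge> 1" unfolding j_def by simp
      have "f y / \<eta> \<le> f 0 / \<eta>" using fy00 eta by (simp add: divide_right_mono)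
      then have "f y / \<eta> < real K" using K by linarith
      then have "\<lfloor>f y / \<eta>\<rfloor> < int K" by linarith
      then have "nat \<lfloor>f y / \<eta>\<rfloor> < K" using fl0 by (simp add: nat_less_iff)
      then have jK: "j \<le> K" unfolding j_def by simp
      have rj: "real j = real_of_int \<lfloor>f y / \<eta>\<rfloor> + 1" unfolding j_def using fl0 by simp
      have "f y / \<eta> < real j" using rj by linarith
      then have up: "f y \<le> real j * \<eta>" using eta by (simp add: field_simps)
      have "real j - 1 \<le> f y / \<eta>" using rj by linarith
      then have lo: "(real j - 1) * \<eta> \<le> f y" using eta by (simp add: field_simps)
      have pj: "p j \<in> S" "f (p j) < real j * \<eta> + \<eta>" "p j \<le> y" using p[OF j1] up yS by auto
      have "p j \<in> G" unfolding G_def using j1 jK by auto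
      then have "p j \<le> x" using xmax pj by auto
      then have "f x \<le> f (p j)" using dec' pj xS by auto
      moreover have "f y \<le> f x" using dec' xS yS xin by auto
      ultimately have "\<bar>f x - f y\<bar> \<le> \<epsilon>" using pj lo \<eta>_def by (auto simp: algebra_simps)
      then show ?thesis using sc True x_def by simp
    qed
  qed
  then show ?thesis using Gfin GS G0 by blast
qed

lemma refine:
  assumes S0: "S \<subseteq> {0..}" and nn: "\<forall>x\<in>S. f x \<ge> 0" and dec: "decreasing_on S f"
    and G: "finite G" "G \<subseteq> S" "0 \<in> G" and F: "finite F" "G \<subseteq> F" "F \<subseteq> S"
    and err: "\<forall>y\<in>S. \<bar>step_fun S f G y - f y\<bar> \<le> \<epsilon>"
  shows "\<forall>y\<in>S. \<bar>step_fun S f F y - f y\<bar> \<le> \<epsilon>"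
proof
  fix y assume yS: "y \<in> S"
  have dec': "\<And>x y. x \<in> S \<Longrightarrow> y \<in> S \<Longrightarrow> x \<le> y \<Longrightarrow> f y \<le> f x"
    using dec unfolding decreasing_on_def by blast
  have F0: "0 \<in> F" using G F by auto
  have y0: "0 \<le> y" using yS S0 by auto
  have MG: "Max G \<in> G" using G by (intro Max_in) auto
  have MGS: "Max G \<in> S" using MG G by auto
  have "\<bar>step_fun S f G (Max G) - f (Max G)\<bar> \<le> \<epsilon>" using err MGS by blast
  then have fMG: "f (Max G) \<le> \<epsilon>" using step_char[OF G(1) G(3) _ MGS, of f] MGS S0 nn by auto
  have MGF: "Max G \<le> Max F" using F MG by (meson Max_ge subsetD)
  note scF = step_char[OF F(1) F0 y0 yS, of f]
  note scG = step_char[OF G(1) G(3) y0 yS, of f]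
  show "\<bar>step_fun S f F y - f y\<bar> \<le> \<epsilon>"
  proof (cases "y < Max F")
    case False
    then show ?thesis using scF scG MGF err yS by auto
  next
    case True
    define x where "x = Max {x\<in>F. x \<le> y}"
    have "x \<in> {x\<in>F. x \<le> y}" unfolding x_def using F(1) F0 y0 by (intro Max_in) auto
    then have xin: "x \<in> F" "x \<le> y" by auto
    have xS: "x \<in> S" using xin F by auto
    have fyx: "f y \<le> f x" using dec' xS yS xin by auto
    have "f x - f y \<le> \<epsilon>"
    proof (cases "y < Max G")
      case True
      define x' where "x' = Max {x\<in>G. x \<le> y}"
      have "x' \<in> {x\<in>G. x \<le> y}" unfolding x'_def using G(1) G(3) y0 by (intro Max_in) auto
      then have x'in: "x' \<in> G" "x' \<le> y" by auto
      have "x' \<le> x" unfolding x_def using F x'in by (intro Max_ge) auto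
      then have "f x \<le> f x'" using dec' xS x'in G by auto
      moreover have "\<bar>f x' - f y\<bar> \<le> \<epsilon>" using err yS scG True x'_def by auto
      ultimately show ?thesis by auto
    next
      case False
      have "Max G \<le> x" unfolding x_def using F MG False by (intro Max_ge) auto
      then have "f x \<le> f (Max G)" using dec' xS MGS by auto
      then show ?thesis using fMG nn yS by auto
    qed
    then show ?thesis using scF True x_def fyx by simp
  qed
qed

theorem lemma2p6:
  fixes S :: "real set" and C :: real and f :: "real \<Rightarrow> real"
  assumes "S \<subseteq> {0..}" and "0 \<in> S" and "C > 0"
    and "\<forall>x\<in>S. f x \<ge> 0"
    and "right_cont_on S f" and "decreasing_on S f"
    and "DP (closure S) (fbar S f) \<subseteq> S"
    and "vanishes_at_infinity S f"
  shows "\<exists>F :: nat \<Rightarrow> real set. \<forall>n.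
           finite (F n) \<and> F n \<subseteq> S \<and> 0 \<in> F n \<and> F n \<subseteq> F (Suc n) \<and>
           sup_norm_on S (\<lambda>y. step_fun S f (F n) y - f y) < C / 2 ^ n"
proof -
  have "\<forall>n::nat. \<exists>G. finite G \<and> G \<subseteq> S \<and> 0 \<in> G \<and> (\<forall>y\<in>S. \<bar>step_fun S f G y - f y\<bar> \<le> C / 2 ^ n / 2)"
    using good_set[OF assms(1,2,4,5,6,7,8)] assms(3) by simp
  then have "\<exists>G. \<forall>n. finite (G n) \<and> G n \<subseteq> S \<and> 0 \<in> G n \<and> (\<forall>y\<in>S. \<bar>step_fun S f (G n) y - f y\<bar> \<le> C / 2 ^ n / 2)"
    by (rule choice)
  then obtain G where G0: "\<forall>n. finite (G n) \<and> G n \<subseteq> S \<and> 0 \<in> G n \<and> (\<forall>y\<in>S. \<bar>step_fun S f (G n) y - f y\<bar> \<le> C / 2 ^ n / 2)"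
    by (rule exE)
  have G: "\<And>n. finite (G n) \<and> G n \<subseteq> S \<and> 0 \<in> G n \<and> (\<forall>y\<in>S. \<bar>step_fun S f (G n) y - f y\<bar> \<le> C / 2 ^ n / 2)"
    by (rule spec[OF G0])
  define F where "F n = (\<Union>k\<le>n. G k)" for n
  have Ff: "finite (F n)" for n unfolding F_def using G by auto
  have FS: "F n \<subseteq> S" for n unfolding F_def using G by auto
  have F0: "0 \<in> F n" for n unfolding F_def using G by auto
  have Fm: "F n \<subseteq> F (Suc n)" for n unfolding F_def by (auto simp: atMost_Suc)
  have "sup_norm_on S (\<lambda>y. step_fun S f (F n) y - f y) < C / 2 ^ n" for n
  proof -
    have GF: "G n \<subseteq> F n" unfolding F_def by auto
    have err: "\<forall>y\<in>S. \<bar>step_fun S f (F n) y - f y\<bar> \<le> C / 2 ^ n / 2"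
    proof -
      have Gn: "finite (G n)" "G n \<subseteq> S" "0 \<in> G n" "\<forall>y\<in>S. \<bar>step_fun S f (G n) y - f y\<bar> \<le> C / 2 ^ n / 2"
        using G[of n] by auto
      show ?thesis by (rule refine[OF assms(1,4,6) Gn(1,2,3) Ff GF FS Gn(4)])
    qed
    have "sup_norm_on S (\<lambda>y. step_fun S f (F n) y - f y) \<le> C / 2 ^ n / 2"
      unfolding sup_norm_on_def using assms(2) err by (intro cSup_least) auto
    also have "\<dots> < C / 2 ^ n"
    proof -
      have pos: "C / 2 ^ n > 0" using assms(3) by simp
      have h: "\<And>t::real. t > 0 \<Longrightarrow> t / 2 < t" by simp
      show ?thesis by (rule h[OF pos])
    qed
    finally show ?thesis .
  qed
  then show ?thesis using Ff FS F0 Fm by (intro exI[of _ F]) auto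
qed
end
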